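(* (a) The map $S\mapsto C(S)$ is a bijection from the set of subsets of $[n]=\{1,\dots,n\}$ to the set of chambers of $I(\mathfrak{gl}_n,V\oplus\bigwedge^2)$; in particular this arrangement has $2^n$ chambers. (b) For $S\subseteq[n]$ and $1\le\ell\le n$ let $\pi_\ell^S=|S\cap[n-\ell+1,\infty)|$ and \[ e_\ell^S=(\underbrace{1,\dots,1}_{\pi_\ell^S},\underbrace{0,\dots,0}_{n-\ell},\underbrace{-1,\dots,-1}_{\ell-\pi_\ell^S})\in\mathbb{R}^n. \] Then the extreme rays of $C(S)$ are the rays generated by $e_1^S,\dots,e_n^S$, and $e_1^S,\dots,e_n^S$ non-negatively span $C(S)$. In particular every chamber is a simplicial cone (the arrangement is simplicial).
   Context: Identify the diagonal Cartan subalgebra of $\mathfrak{gl}_n$ with $\mathbb{R}^n$ with coordinates $x_1,\dots,x_n$. Let $W=\{x_1\ge\cdots\ge x_n\}$ and $W^0=\{x_1>\cdots>x_n\}$. For $1\le i\le j\le n$ let $\lambda_{i,j}^\perp$ be the hyperplane $x_i+x_j=0$ (for $i=j$: $x_i=0$); $I(\mathfrak{gl}_n,V\oplus\bigwedge^2)$ is the arrangement of these hyperplanes restricted to $W$. Chambers are the closures of the connected components of $W^0\setminus\bigcup\lambda_{i,j}^\perp$; a face is a chamber or the intersection of a chamber with a supporting hyperplane; an extreme ray is a face that is a half-line. For $S=\{a_1>a_2>\cdots>a_k\}\subseteq[n]$, $C(S)$ is the subset of $W$ on which, for all $1\le i\le j\le n$: $x_i+x_j\ge0$ if $i\le k$ and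 $j\le i+a_i-1$, and $x_i+x_j\le0$ otherwise (equivalently, in the right-justified tableau of signs of $x_i+x_j$, row $i$ has exactly $a_i$ plus signs for $i\le k$ and none for $i>k$). *)

theory Defs
  imports "HOL-Analysis.Analysis"
begin

text \<open>Points of R^n are modelled as functions nat => real that vanish outside the
index set {1..n}; coordinate i is x i. The type nat => real carries the product
topology (HOL-Analysis Function_Topology); on this closed subspace it is the usual
Euclidean topology of R^n.\<close>

definition Rn :: "nat \<Rightarrow> (nat \<Rightarrow> real) set" where
  "Rn n = {x. \<forall>i. i \<notin> {1..n} \<longrightarrow> x i = 0}"

definition Wc :: "nat \<Rightarrow> (nat \<Rightarrow> real) set" where
  "Wc n = {x \<in> Rn n. \<forall>i. 1 \<le> i \<and> i < n \<longrightarrow> x i \<ge> x (Suc i)}"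

definition W0 :: "nat \<Rightarrow> (nat \<Rightarrow> real) set" where
  "W0 n = {x \<in> Rn n. \<forall>i. 1 \<le> i \<and> i < n \<longrightarrow> x i > x (Suc i)}"

definition hyp :: "nat \<Rightarrow> nat \<Rightarrow> nat \<Rightarrow> (nat \<Rightarrow> real) set" where
  "hyp n i j = {x \<in> Rn n. (if i = j then x i = 0 else x i + x j = 0)}"

definition arr_union :: "nat \<Rightarrow> (nat \<Rightarrow> real) set" where
  "arr_union n = (\<Union>i\<in>{1..n}. \<Union>j\<in>{i..n}. hyp n i j)"

definition chambers :: "nat \<Rightarrow> (nat \<Rightarrow> real) set set" where
  "chambers n = closure ` components (W0 n - arr_union n)"

definition kth_largest :: "nat set \<Rightarrow> nat \<Rightarrow> nat" where
  "kth_largest S i = rev (sorted_list_of_set S) ! (i - 1)"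

definition Cset :: "nat \<Rightarrow> nat set \<Rightarrow> (nat \<Rightarrow> real) set" where
  "Cset n S = {x \<in> Wc n. \<forall>i j. 1 \<le> i \<and> i \<le> j \<and> j \<le> n \<longrightarrow>
      (if i \<le> card S \<and> j \<le> i + kth_largest S i - 1 then x i + x j \<ge> 0
       else x i + x j \<le> 0)}"

definition lin_form :: "nat \<Rightarrow> (nat \<Rightarrow> real) \<Rightarrow> (nat \<Rightarrow> real) \<Rightarrow> real" where
  "lin_form n a x = (\<Sum>i=1..n. a i * x i)"

definition supporting_hyperplane ::
  "nat \<Rightarrow> (nat \<Rightarrow> real) set \<Rightarrow> (nat \<Rightarrow> real) set \<Rightarrow> bool" where
  "supporting_hyperplane n C H \<longleftrightarrow>
     (\<exists>a b. a \<in> Rn n \<and> a \<noteq> (\<lambda>i. 0) \<and> H = {x \<in> Rn n. lin_form n a x = b} \<and>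
        (\<forall>x\<in>C. lin_form n a x \<le> b) \<and> C \<inter> H \<noteq> {})"

definition is_face :: "nat \<Rightarrow> (nat \<Rightarrow> real) set \<Rightarrow> (nat \<Rightarrow> real) set \<Rightarrow> bool" where
  "is_face n C F \<longleftrightarrow> F = C \<or> (\<exists>H. supporting_hyperplane n C H \<and> F = C \<inter> H)"

definition ray_from :: "(nat \<Rightarrow> real) \<Rightarrow> (nat \<Rightarrow> real) \<Rightarrow> (nat \<Rightarrow> real) set" where
  "ray_from p v = {(\<lambda>i. p i + t * v i) | t. t \<ge> 0}"

definition is_halfline :: "nat \<Rightarrow> (nat \<Rightarrow> real) set \<Rightarrow> bool" where
  "is_halfline n F \<longleftrightarrow> (\<exists>p v. p \<in> Rn n \<and> v \<in> Rn n \<and> v \<noteq> (\<lambda>i. 0) \<and> F = ray_from p v)"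

definition extreme_rays :: "nat \<Rightarrow> (nat \<Rightarrow> real) set \<Rightarrow> (nat \<Rightarrow> real) set set" where
  "extreme_rays n C = {F. is_face n C F \<and> is_halfline n F}"

definition pi_S :: "nat \<Rightarrow> nat set \<Rightarrow> nat \<Rightarrow> nat" where
  "pi_S n S l = card (S \<inter> {n - l + 1..})"

definition e_vec :: "nat \<Rightarrow> nat set \<Rightarrow> nat \<Rightarrow> (nat \<Rightarrow> real)" where
  "e_vec n S l = (\<lambda>i. if i < 1 \<or> i > n then 0
                      else if i \<le> pi_S n S l then 1
                      else if i \<le> pi_S n S l + (n - l) then 0
                      else -1)"

definition nonneg_span :: "nat \<Rightarrow> (nat \<Rightarrow> nat \<Rightarrow> real) \<Rightarrow> (nat \<Rightarrow> real) set" where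
  "nonneg_span n e = {(\<lambda>i. \<Sum>l=1..n. c l * e l i) | c. \<forall>l\<in>{1..n}. c l \<ge> 0}"

definition lin_indep_fam :: "nat \<Rightarrow> (nat \<Rightarrow> nat \<Rightarrow> real) \<Rightarrow> bool" where
  "lin_indep_fam n e \<longleftrightarrow>
     (\<forall>c. (\<lambda>i. \<Sum>l=1..n. c l * e l i) = (\<lambda>i. 0) \<longrightarrow> (\<forall>l\<in>{1..n}. c l = 0))"

end

theory Submission
  imports Defs
begin


lemma kl_list:
  fixes S :: "nat set" assumes "finite S"
  defines "L \<equiv> rev (sorted_list_of_set S)"
  shows "length L = card S" "set L = S" "sorted_wrt (>) L" "distinct L"
    "\<And>i. kth_largest S i = L ! (i - 1)"
  using assms by (auto simp: L_def kth_largest_def sorted_wrt_rev)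

lemma kl_decr:
  fixes S :: "nat set" assumes "finite S" "1 \<le> i" "i < j" "j \<le> card S"
  shows "kth_largest S j < kth_largest S i"
proof -
  define L where "L = rev (sorted_list_of_set S)"
  note kl = kl_list[OF assms(1), folded L_def]
  have "L ! (i-1) > L ! (j-1)"
    using kl(3) assms(2-4) kl(1) by (auto simp: sorted_wrt_iff_nth_less)
  then show ?thesis using kl(5) by simp
qed

lemma kl_image:
  fixes S :: "nat set" assumes "finite S"
  shows "kth_largest S ` {1..card S} = S"
proof -
  define L where "L = rev (sorted_list_of_set S)"
  note kl = kl_list[OF assms(1), folded L_def]
  have "kth_largest S ` {1..card S} = (\<lambda>i. L ! (i - 1)) ` {1..card S}"
    using kl(5) by simp
  also have "\<dots> = (\<lambda>i. L ! i) ` {..<length L}"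
  proof -
    have "{1..card S} = Suc ` {..<length L}" using kl(1)
      by (simp add: atLeastAtMost_iff lessThan_atLeast0 image_Suc_atLeastLessThan atLeastLessThanSuc_atLeastAtMost)
    then show ?thesis by (simp add: image_image)
  qed
  also have "\<dots> = set L" by (auto simp: in_set_conv_nth)
  finally show ?thesis using kl(2) by simp
qed

lemma kl_unique:
  fixes S :: "nat set" and f :: "nat \<Rightarrow> nat"
  assumes dec: "\<And>i j. 1 \<le> i \<Longrightarrow> i < j \<Longrightarrow> j \<le> k \<Longrightarrow> f j < f i"
    and img: "f ` {1..k} = S"
  shows "card S = k" "\<And>i. i \<in> {1..k} \<Longrightarrow> kth_largest S i = f i"
proof -
  have inj: "inj_on f {1..k}"
    by (rule inj_onI) (metis atLeastAtMost_iff dec less_irrefl nat_neq_iff)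
  show ck: "card S = k" using card_image[OF inj] img by simp
  have fin: "finite S" using img by auto
  define L' where "L' = map (\<lambda>j. f (k - j)) [0..<k]"
  have sw: "sorted_wrt (<) L'"
    unfolding L'_def sorted_wrt_iff_nth_less by (auto intro!: dec)
  have sL: "set L' = S"
  proof -
    have "set L' = (\<lambda>j. f (k - j)) ` {0..<k}" by (simp add: L'_def)
    also have "\<dots> = f ` {1..k}"
    proof (rule set_eqI, rule iffI)
      fix y assume "y \<in> (\<lambda>j. f (k - j)) ` {0..<k}"
      then obtain j where "j < k" "y = f (k - j)" by auto
      then show "y \<in> f ` {1..k}" by (intro image_eqI[of _ _ "k - j"]) auto
    next
      fix y assume "y \<in> f ` {1..k}"
      then obtain j where "1 \<le> j" "j \<le> k" "y = f j" by auto
      then show "y \<in> (\<lambda>j. f (k - j)) ` {0..<k}" by (intro image_eqI[of _ _ "k - j"]) auto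
    qed
    finally show ?thesis using img by simp
  qed
  have "length L' = k" by (simp add: L'_def)
  then have "sorted_list_of_set S = L'"
    using sorted_list_of_set_unique[OF fin, THEN iffD1, OF conjI[OF sw conjI[OF sL]]] ck by simp
  then have eq: "rev (sorted_list_of_set S) = rev L'" by simp
  fix i assume i: "i \<in> {1..k}"
  have "kth_largest S i = rev L' ! (i - 1)" by (simp add: kth_largest_def eq)
  also have "\<dots> = L' ! (length L' - Suc (i - 1))"
    using i by (intro rev_nth) (auto simp add: L'_def)
  also have "length L' - Suc (i - 1) = k - i" using i by (simp add: L'_def)
  also have "L' ! (k - i) = f i" using i by (simp add: L'_def)
  finally show "kth_largest S i = f i" .
qed



lemma card_plus_one:
  assumes "finite B" "A \<subseteq> B" "x \<in> B" "x \<notin> A"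
  shows "card A + 1 \<le> card B"
proof -
  have "insert x A \<subseteq> B" using assms by auto
  then have "card (insert x A) \<le> card B" using assms(1) by (intro card_mono)
  moreover have "finite A" using assms(1,2) finite_subset by blast
  ultimately show ?thesis using assms(4) by simp
qed

locale chb =
  fixes n :: nat and S :: "nat set"
  assumes Ssub: "S \<subseteq> {1..n}"
begin

definition k where "k = card S"
definition a where "a = kth_largest S"
definition N where "N t = card (S \<inter> {t..})"
definition pp where "pp m = pi_S n S m"
definition lab where "lab m \<longleftrightarrow> n - m + 1 \<in> S"
definition q where "q m = m - pp m"
definition idx where "idx m = (if lab m then pp m else n + 1 - q m)"
definition sg :: "nat \<Rightarrow> real" where "sg m = (if lab m then 1 else -1)"
definition z where "z m x = (if 1 \<le> m \<and> m \<le> n then sg m * x (idx m) else 0)"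
definition cf where "cf m x = z m x - z (Suc m) x"
abbreviation E where "E \<equiv> e_vec n S"

lemma finS: "finite S" using Ssub finite_subset by blast

lemma N_mono: "t \<le> t' \<Longrightarrow> N t' \<le> N t"
  unfolding N_def using finS by (intro card_mono) auto

lemma N_int: "t \<le> t' \<Longrightarrow> N t \<le> N t' + (t' - t)"
proof -
  assume "t \<le> t'"
  have "S \<inter> {t..} \<subseteq> (S \<inter> {t'..}) \<union> {t..<t'}" by auto
  then have "N t \<le> card ((S \<inter> {t'..}) \<union> {t..<t'})"
    unfolding N_def using finS by (intro card_mono) auto
  also have "\<dots> \<le> N t' + card {t..<t'}" unfolding N_def by (rule card_Un_le)
  finally show ?thesis by simp
qed

lemma N_Suc: "N t = N (Suc t) + (if t \<in> S then 1 else 0)"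
proof -
  have "S \<inter> {t..} = (S \<inter> {Suc t..}) \<union> (S \<inter> {t})" by auto
  moreover have "card ((S \<inter> {Suc t..}) \<union> (S \<inter> {t})) = N (Suc t) + card (S \<inter> {t})"
    unfolding N_def using finS by (intro card_Un_disjoint) auto
  ultimately show ?thesis by (auto simp: N_def)
qed

lemma N_big: "n < t \<Longrightarrow> N t = 0"
proof -
  assume "n < t"
  then have "S \<inter> {t..} = {}" using Ssub by auto
  then show ?thesis by (simp add: N_def)
qed

lemma N_1: "N 1 = k"
proof -
  have "S \<inter> {1..} = S" using Ssub by auto
  then show ?thesis by (simp add: N_def k_def)
qed

lemma a_decr: "1 \<le> i \<Longrightarrow> i < j \<Longrightarrow> j \<le> k \<Longrightarrow> a j < a i"
  unfolding a_def k_def using kl_decr finS by blast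

lemma a_img: "a ` {1..k} = S"
  unfolding a_def k_def using kl_image finS by blast

lemma a_in: "i \<in> {1..k} \<Longrightarrow> a i \<in> S" using a_img by blast

lemma N_a: assumes "i \<in> {1..k}" shows "N (a i) = i"
proof -
  have "S \<inter> {a i..} = a ` {1..i}"
  proof
    show "S \<inter> {a i..} \<subseteq> a ` {1..i}"
    proof
      fix s assume s: "s \<in> S \<inter> {a i..}"
      then obtain j where j: "j \<in> {1..k}" "s = a j" using a_img by blast
      have "j \<le> i"
      proof (rule ccontr)
        assume "\<not> j \<le> i"
        then have "a j < a i" using a_decr assms j by auto
        then show False using s j by auto
      qed
      then show "s \<in> a ` {1..i}" using j by auto
    qed
    show "a ` {1..i} \<subseteq> S \<inter> {a i..}"
    proof
      fix s assume "s \<in> a ` {1..i}"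
      then obtain j where j: "j \<in> {1..i}" "s = a j" by auto
      then have "a i \<le> a j" using a_decr[of j i] assms by (cases "j = i") auto
      then show "s \<in> S \<inter> {a i..}" using a_in j assms by auto
    qed
  qed
  moreover have "inj_on a {1..i}"
    by (rule inj_onI) (metis a_decr assms atLeastAtMost_iff le_trans linorder_neqE_nat less_irrefl)
  ultimately show ?thesis unfolding N_def by (simp add: card_image)
qed

lemma a_le_iff: assumes "i \<in> {1..k}" shows "i \<le> N t \<longleftrightarrow> t \<le> a i"
proof
  assume "t \<le> a i" then show "i \<le> N t" using N_mono N_a assms by metis
next
  assume h: "i \<le> N t"
  show "t \<le> a i"
  proof (rule ccontr)
    assume "\<not> t \<le> a i"
    then have "N t \<le> N (Suc (a i))" by (intro N_mono) auto
    moreover have "N (a i) = N (Suc (a i)) + 1" using N_Suc[of "a i"] a_in assms by simp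
    ultimately show False using h N_a assms by simp
  qed
qed

lemma a_of: assumes "t \<in> S" shows "N t \<in> {1..k}" "a (N t) = t"
proof -
  obtain j where j: "j \<in> {1..k}" "t = a j" using a_img assms by blast
  then show "N t \<in> {1..k}" "a (N t) = t" using N_a by auto
qed

lemma a_range: assumes "i \<in> {1..k}" shows "1 \<le> a i" "a i + i \<le> n + 1"
proof -
  show "1 \<le> a i" using a_in[OF assms] Ssub by auto
  have "a i \<le> n" using a_in[OF assms] Ssub by auto
  then have "N (a i) \<le> N (n + 1) + (n + 1 - a i)" by (intro N_int) auto
  then show "a i + i \<le> n + 1" using N_a[OF assms] N_big[of "n+1"] \<open>a i \<le> n\<close> by simp
qed

lemma k_le: "k \<le> n"
  unfolding k_def using card_mono[OF _ Ssub] by simp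

lemma pp_N: "pp m = N (n - m + 1)"
  by (simp add: pp_def pi_S_def N_def)

lemma pp_card: assumes "m \<le> n" shows "pp m = card {j \<in> {1..m}. lab j}"
proof -
  have "S \<inter> {n - m + 1..} = (\<lambda>j. n - j + 1) ` {j \<in> {1..m}. lab j}"
  proof
    show "S \<inter> {n - m + 1..} \<subseteq> (\<lambda>j. n - j + 1) ` {j \<in> {1..m}. lab j}"
    proof
      fix s assume s: "s \<in> S \<inter> {n - m + 1..}"
      then have s1: "1 \<le> s" "s \<le> n" using Ssub by auto
      show "s \<in> (\<lambda>j. n - j + 1) ` {j \<in> {1..m}. lab j}"
        apply (rule image_eqI[of _ _ "n + 1 - s"])
        using s s1 assms by (auto simp: lab_def)
    qed
  next
    show "(\<lambda>j. n - j + 1) ` {j \<in> {1..m}. lab j} \<subseteq> S \<inter> {n - m + 1..}"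
      using assms by (auto simp: lab_def)
  qed
  moreover have "inj_on (\<lambda>j. n - j + 1) {j \<in> {1..m}. lab j}"
    using assms by (intro inj_onI) auto
  ultimately show ?thesis by (simp add: pp_N N_def card_image)
qed

lemma q_card: assumes "m \<le> n" shows "q m = card {j \<in> {1..m}. \<not> lab j}" "pp m \<le> m"
proof -
  have "{1..m} = {j \<in> {1..m}. lab j} \<union> {j \<in> {1..m}. \<not> lab j}" by auto
  then have "m = card {j \<in> {1..m}. lab j} + card {j \<in> {1..m}. \<not> lab j}"
    by (metis (no_types, lifting) card_Un_disjoint card_atLeastAtMost diff_Suc_1 disjoint_iff finite_Un finite_atLeastAtMost mem_Collect_eq)
  then show "q m = card {j \<in> {1..m}. \<not> lab j}" "pp m \<le> m"
    using pp_card[OF assms] by (auto simp: q_def)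
qed

lemma pp_q_sum: "m \<le> n \<Longrightarrow> pp m + q m = m"
  using q_card(2) by (simp add: q_def)

lemma pp_mono: "l \<le> m \<Longrightarrow> m \<le> n \<Longrightarrow> pp l \<le> pp m"
  using pp_card by (auto intro!: card_mono)

lemma q_mono: "l \<le> m \<Longrightarrow> m \<le> n \<Longrightarrow> q l \<le> q m"
  using q_card by (auto intro!: card_mono)

lemma pp_strict: assumes "l < m" "m \<le> n" "lab m" shows "pp l + 1 \<le> pp m"
proof -
  have "card {j \<in> {1..l}. lab j} + 1 \<le> card {j \<in> {1..m}. lab j}"
    using assms by (intro card_plus_one[where x=m]) auto
  then show ?thesis using pp_card[of l] pp_card[of m] assms by simp
qed

lemma q_strict: assumes "l < m" "m \<le> n" "\<not> lab m" shows "q l + 1 \<le> q m"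
proof -
  have "card {j \<in> {1..l}. \<not> lab j} + 1 \<le> card {j \<in> {1..m}. \<not> lab j}"
    using assms by (intro card_plus_one[where x=m]) auto
  then show ?thesis using q_card(1)[of l] q_card(1)[of m] assms by simp
qed

lemma pp_diff: assumes "l \<le> m" "m \<le> n" shows "pp m \<le> pp l + (m - l)"
proof -
  have "{j \<in> {1..m}. lab j} \<subseteq> {j \<in> {1..l}. lab j} \<union> {l<..m}" by auto
  then have "card {j \<in> {1..m}. lab j} \<le> card ({j \<in> {1..l}. lab j} \<union> {l<..m})"
    by (intro card_mono) auto
  also have "\<dots> \<le> card {j \<in> {1..l}. lab j} + card {l<..m}" by (rule card_Un_le)
  finally show ?thesis using pp_card[of l] pp_card[of m] assms by simp
qed

lemma pp_n: "pp n = k" using pp_N N_1 by simp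
lemma pp_0: "pp 0 = 0" using pp_N N_big[of "n+1"] by simp
lemma q_n: "q n = n - k" using pp_n by (simp add: q_def)

lemma pp_le_k: "m \<le> n \<Longrightarrow> pp m \<le> k" using pp_mono[of m n] pp_n by simp

lemma lab_pp_pos: "1 \<le> m \<Longrightarrow> m \<le> n \<Longrightarrow> lab m \<Longrightarrow> 1 \<le> pp m"
  using pp_strict[of 0 m] pp_0 by simp

lemma nlab_q_pos: "1 \<le> m \<Longrightarrow> m \<le> n \<Longrightarrow> \<not> lab m \<Longrightarrow> 1 \<le> q m"
  using q_strict[of 0 m] by (simp add: q_def pp_0)

lemma q_le: "m \<le> n \<Longrightarrow> q m \<le> n - k" using q_mono[of m n] q_n by simp

lemma idx_range: assumes "1 \<le> m" "m \<le> n"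
  shows "1 \<le> idx m" "idx m \<le> n" "lab m \<Longrightarrow> idx m \<le> k" "\<not> lab m \<Longrightarrow> k < idx m"
  using assms lab_pp_pos[OF assms] nlab_q_pos[OF assms] pp_le_k[OF assms(2)] q_le[OF assms(2)] k_le
  by (auto simp: idx_def)

lemma idx_inj: "inj_on idx {1..n}"
proof (rule inj_onI)
  fix m m' assume m: "m \<in> {1..n}" and m': "m' \<in> {1..n}" and eq: "idx m = idx m'"
  show "m = m'"
  proof (rule ccontr)
    assume "m \<noteq> m'"
    then consider "m < m'" | "m' < m" by linarith
    then show False
    proof cases
      case 1
      then show False using eq m m' idx_range[of m] idx_range[of m'] pp_strict[of m m'] q_strict[of m m']
        q_le[of m'] by (auto simp: idx_def split: if_splits)
    next
      case 2
      then show False using eq m m' idx_range[of m] idx_range[of m'] pp_strict[of m' m] q_strict[of m' m]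
        q_le[of m] by (auto simp: idx_def split: if_splits)
    qed
  qed
qed

lemma idx_surj: "idx ` {1..n} = {1..n}"
  using idx_inj idx_range by (intro endo_inj_surj) auto

lemma E_idx: assumes "m \<in> {1..n}" "l \<in> {1..n}"
  shows "E l (idx m) = sg m * (if m \<le> l then 1 else 0)"
proof -
  have r: "1 \<le> idx m" "idx m \<le> n" using idx_range assms by auto
  have s: "pp l + q l = l" "pp m + q m = m" using pp_q_sum assms by auto
  have kk: "pp l \<le> k" "k \<le> n" "q m \<le> n - k" "m \<le> n" "l \<le> n" "1 \<le> m" "1 \<le> l"
    using pp_le_k q_le assms k_le by auto
  show ?thesis
  proof (cases "m \<le> l")
    case True
    have "pp m \<le> pp l" "q m \<le> q l" using True assms pp_mono q_mono by auto
    then show ?thesis using True r s kk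
      by (auto simp: e_vec_def sg_def idx_def pp_def[symmetric])
  next
    case False
    have "lab m \<Longrightarrow> pp l + 1 \<le> pp m" "\<not> lab m \<Longrightarrow> q l + 1 \<le> q m" "pp m \<le> pp l + (m - l)"
      using False assms pp_strict q_strict pp_diff by auto
    then show ?thesis using False r s kk
      by (auto simp: e_vec_def sg_def idx_def pp_def[symmetric])
  qed
qed

end


context chb begin

definition comb :: "(nat \<Rightarrow> real) \<Rightarrow> nat \<Rightarrow> real" where
  "comb c = (\<lambda>i. \<Sum>l=1..n. c l * E l i)"

lemma sg_sq: "sg m * sg m = 1" by (simp add: sg_def)

lemma z_E: assumes "m \<in> {1..n}" "l \<in> {1..n}" shows "z m (E l) = (if m \<le> l then 1 else 0)"
  using E_idx[OF assms] assms by (auto simp: z_def sg_def)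

lemma z_comb: assumes "1 \<le> m" "m \<le> n + 1" shows "z m (comb c) = (\<Sum>l=m..n. c l)"
proof (cases "m \<le> n")
  case True
  then have mm: "m \<in> {1..n}" using assms by auto
  have "z m (comb c) = (\<Sum>l=1..n. c l * (sg m * E l (idx m)))"
    using True assms by (simp add: z_def comb_def sum_distrib_left algebra_simps)
  also have "\<dots> = (\<Sum>l=1..n. if m \<le> l then c l else 0)"
    by (intro sum.cong refl) (simp add: E_idx[OF mm] mult.assoc[symmetric] sg_sq)
  also have "\<dots> = (\<Sum>l\<in>{l\<in>{1..n}. m \<le> l}. c l)" by (rule sum.inter_filter[symmetric]) simp
  also have "{l\<in>{1..n}. m \<le> l} = {m..n}" using assms by auto
  finally show ?thesis .
next
  case False
  then show ?thesis by (simp add: z_def)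
qed

lemma cf_comb: assumes "m \<in> {1..n}" shows "cf m (comb c) = c m"
proof -
  have "z m (comb c) = (\<Sum>l=m..n. c l)" "z (Suc m) (comb c) = (\<Sum>l=Suc m..n. c l)"
    using assms by (auto intro!: z_comb)
  moreover have "(\<Sum>l=m..n. c l) = c m + (\<Sum>l=Suc m..n. c l)"
    using assms by (intro sum.atLeast_Suc_atMost) auto
  ultimately show ?thesis by (simp add: cf_def)
qed

lemma z_tele: assumes "1 \<le> m" "m \<le> n + 1" shows "z m x = (\<Sum>l=m..n. cf l x)"
proof -
  have "(\<Sum>i=m..n. (\<lambda>j. - z j x) (Suc i) - (\<lambda>j. - z j x) i) = (\<lambda>j. - z j x) (Suc n) - (\<lambda>j. - z j x) m"
    using assms by (intro sum_Suc_diff) auto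
  then show ?thesis by (simp add: cf_def z_def)
qed

lemma E_Rn: "E l \<in> Rn n" by (auto simp: Rn_def e_vec_def)

lemma comb_Rn: "comb c \<in> Rn n" by (auto simp: Rn_def comb_def e_vec_def)

lemma z_idx: assumes "m \<in> {1..n}" shows "y (idx m) = sg m * z m y"
  using assms by (auto simp: z_def mult.assoc[symmetric] sg_sq)

lemma recon: assumes "x \<in> Rn n" shows "comb (\<lambda>l. cf l x) = x"
proof
  fix i
  show "comb (\<lambda>l. cf l x) i = x i"
  proof (cases "i \<in> {1..n}")
    case False
    then show ?thesis using comb_Rn[of "\<lambda>l. cf l x"] assms by (auto simp: Rn_def)
  next
    case True
    then obtain m where m: "m \<in> {1..n}" "i = idx m" using idx_surj by blast
    have "z m (comb (\<lambda>l. cf l x)) = z m x" using m z_comb z_tele by auto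
    then show ?thesis using z_idx[OF m(1)] m(2) by metis
  qed
qed

lemma Cset_tab: assumes "x \<in> Cset n S" "1 \<le> i" "i \<le> j" "j \<le> n"
  shows "if i \<le> k \<and> j \<le> i + a i - 1 then 0 \<le> x i + x j else x i + x j \<le> 0"
  using assms unfolding Cset_def k_def a_def by auto

lemma Cset_W: assumes "x \<in> Cset n S" "1 \<le> i" "i < n" shows "x (Suc i) \<le> x i"
  using assms unfolding Cset_def Wc_def by auto

lemma Cset_Rn: "x \<in> Cset n S \<Longrightarrow> x \<in> Rn n" unfolding Cset_def Wc_def by auto

lemma a_lab: assumes "lab m" shows "a (pp m) = n - m + 1"
  using a_of(2)[of "n - m + 1"] assms by (simp add: lab_def pp_N)

lemma pp_step: assumes "m < n"
  shows "pp (Suc m) = pp m + (if lab (Suc m) then 1 else 0)"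
  using pp_strict[of m "Suc m"] pp_diff[of m "Suc m"] q_strict[of m "Suc m"] pp_mono[of m "Suc m"]
    pp_q_sum[of m] pp_q_sum[of "Suc m"] assms by auto

lemma CK: assumes x: "x \<in> Cset n S" and m: "m \<in> {1..n}" shows "0 \<le> cf m x"
proof (cases "m = n")
  case True
  have zn: "z (Suc n) x = 0" by (simp add: z_def)
  show ?thesis
  proof (cases "lab n")
    case True
    then have "1 \<in> S" by (simp add: lab_def)
    then have ak: "a k = 1" using a_of[of 1] N_1 by simp
    have k1: "1 \<le> k" using lab_pp_pos[of n] True pp_n m by auto
    have "idx n = k" using True pp_n by (simp add: idx_def)
    moreover have "0 \<le> x k + x k" using Cset_tab[OF x k1, of k] k1 ak k_le by simp
    ultimately show ?thesis using \<open>m = n\<close> True zn k1 k_le by (simp add: cf_def z_def sg_def)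
  next
    case False
    have q1: "1 \<le> q n" using nlab_q_pos[of n] False m by auto
    then have kn: "k < n" using q_n by simp
    have "idx n = k + 1" using False q_n kn by (simp add: idx_def)
    moreover have "x (k+1) + x (k+1) \<le> 0" using Cset_tab[OF x, of "k+1" "k+1"] kn by simp
    ultimately show ?thesis using \<open>m = n\<close> False zn kn by (simp add: cf_def z_def sg_def)
  qed
next
  case False
  then have mn: "m < n" "1 \<le> m" using m by auto
  have s: "pp m + q m = m" "pp (Suc m) + q (Suc m) = Suc m" using pp_q_sum mn by auto
  have st: "pp (Suc m) = pp m + (if lab (Suc m) then 1 else 0)" using pp_step mn by simp
  have kk: "pp m \<le> k" "pp (Suc m) \<le> k" "k \<le> n" "pp m \<le> m" using pp_le_k mn k_le q_card(2)[of m] by auto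
  have cfe: "cf m x = sg m * x (idx m) - sg (Suc m) * x (idx (Suc m))"
    using mn by (simp add: cf_def z_def)
  consider "lab m" "lab (Suc m)" | "lab m" "\<not> lab (Suc m)" | "\<not> lab m" "lab (Suc m)"
    | "\<not> lab m" "\<not> lab (Suc m)" by blast
  then show ?thesis
  proof cases
    case 1
    have i1: "1 \<le> pp m" using lab_pp_pos mn 1 by auto
    have "x (Suc (pp m)) \<le> x (pp m)" using Cset_W[OF x i1] st 1 kk by simp
    then show ?thesis using cfe 1 st by (simp add: idx_def sg_def)
  next
    case 2
    have i1: "1 \<le> pp m" using lab_pp_pos mn 2 by auto
    have ai: "a (pp m) = n - m + 1" using a_lab 2 by simp
    have j: "idx (Suc m) = n - m + pp m" using 2 st s mn by (simp add: idx_def)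
    have c: "pp m \<le> n - m + pp m" "n - m + pp m \<le> n" "pp m \<le> k \<and> n - m + pp m \<le> pp m + a (pp m) - 1"
      using ai kk mn by auto
    have "0 \<le> x (pp m) + x (n - m + pp m)"
      using Cset_tab[OF x i1 c(1) c(2)] c(3) by simp
    then show ?thesis using cfe 2 j by (simp add: idx_def sg_def)
  next
    case 3
    have ai: "a (pp m + 1) = n - m" using a_lab[of "Suc m"] 3 st mn by simp
    have q1: "1 \<le> q m" using nlab_q_pos mn 3 by auto
    have j: "idx m = n + 1 - m + pp m" using 3 s mn kk by (simp add: idx_def)
    have c: "1 \<le> pp m + 1" "pp m + 1 \<le> n + 1 - m + pp m" "n + 1 - m + pp m \<le> n"
       "\<not> (pp m + 1 \<le> k \<and> n + 1 - m + pp m \<le> pp m + 1 + a (pp m + 1) - 1)"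
      using ai kk mn st 3 q1 s by auto
    have "x (pp m + 1) + x (n + 1 - m + pp m) \<le> 0"
      using Cset_tab[OF x c(1) c(2) c(3)] c(4) by auto
    then show ?thesis using cfe 3 j st by (simp add: idx_def sg_def)
  next
    case 4
    have q1: "1 \<le> q m" using nlab_q_pos mn 4 by auto
    have qs: "q (Suc m) = q m + 1" using st s 4 by simp
    have ql: "q (Suc m) \<le> n - k" using q_le mn by simp
    have i: "1 \<le> n - q m" "n - q m < n" "Suc (n - q m) = n + 1 - q m" using q1 qs ql mn by auto
    have "x (Suc (n - q m)) \<le> x (n - q m)" using Cset_W[OF x i(1) i(2)] .
    then show ?thesis using cfe 4 qs i(3) by (simp add: idx_def sg_def)
  qed
qed

end


context chb begin

lemma tabI: assumes "x \<in> Wc n"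
  and "\<And>i j. 1 \<le> i \<Longrightarrow> i \<le> j \<Longrightarrow> j \<le> n \<Longrightarrow>
        (if i \<le> k \<and> j \<le> i + a i - 1 then 0 \<le> x i + x j else x i + x j \<le> 0)"
  shows "x \<in> Cset n S"
  using assms unfolding Cset_def k_def a_def by auto

lemma E_Wc: "E l \<in> Wc n"
  using E_Rn by (auto simp: Wc_def e_vec_def)

lemma E_in: assumes l: "l \<in> {1..n}" shows "E l \<in> Cset n S"
proof (rule tabI[OF E_Wc])
  fix i j assume ij: "1 \<le> i" "i \<le> j" "j \<le> n"
  have P: "pp l = N (n - l + 1)" by (rule pp_N)
  have fA: "a i + i \<le> pp l + (n - l) + 1" if "i \<le> k" "\<not> i \<le> pp l"
  proof -
    have ik: "i \<in> {1..k}" using that ij by auto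
    have "a i < n - l + 1" using a_le_iff[OF ik, of "n - l + 1"] that P by auto
    then have "N (a i) \<le> N (n - l + 1) + (n - l + 1 - a i)" by (intro N_int) auto
    then show ?thesis using N_a[OF ik] P \<open>a i < n - l + 1\<close> by simp
  qed
  have fB: "i \<le> k \<and> pp l + (n - l) + 1 \<le> i + a i" if "i \<le> pp l"
  proof -
    have ik: "i \<in> {1..k}" using that ij pp_le_k[of l] l by auto
    have "n - l + 1 \<le> a i" using a_le_iff[OF ik, of "n - l + 1"] that P by auto
    then have "N (n - l + 1) \<le> N (a i) + (a i - (n - l + 1))" by (intro N_int) auto
    then show ?thesis using N_a[OF ik] P \<open>n - l + 1 \<le> a i\<close> ik by simp
  qed
  have a1: "i \<le> k \<Longrightarrow> 1 \<le> a i" using a_range(1) ij by auto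
  have gA: "j \<le> pp l + (n - l)" if "i \<le> k" "j \<le> i + a i - 1" "\<not> i \<le> pp l"
    using fA[OF that(1) that(3)] that a1 by linarith
  have gB: "i \<le> k \<and> j \<le> i + a i - 1" if "i \<le> pp l" "j \<le> pp l + (n - l)"
    using fB[OF that(1)] that a1 by auto
  show "if i \<le> k \<and> j \<le> i + a i - 1 then 0 \<le> E l i + E l j else E l i + E l j \<le> 0"
  proof (cases "i \<le> k \<and> j \<le> i + a i - 1")
    case True
    then show ?thesis using gA ij by (cases "i \<le> pp l") (auto simp: e_vec_def pp_def[symmetric])
  next
    case False
    then show ?thesis using gB ij by (auto simp: e_vec_def pp_def[symmetric])
  qed
qed

lemma E_tab: assumes "l \<in> {1..n}" "1 \<le> i" "i \<le> j" "j \<le> n"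
  shows "if i \<le> k \<and> j \<le> i + a i - 1 then 0 \<le> E l i + E l j else E l i + E l j \<le> 0"
  using Cset_tab[OF E_in[OF assms(1)] assms(2-4)] .

lemma cone: assumes c: "\<And>l. l \<in> {1..n} \<Longrightarrow> 0 \<le> c l" shows "comb c \<in> Cset n S"
proof (rule tabI)
  show "comb c \<in> Wc n"
    unfolding Wc_def
  proof (safe intro!: comb_Rn)
    fix i assume i: "1 \<le> i" "i < n"
    show "comb c (Suc i) \<le> comb c i"
      unfolding comb_def
      by (intro sum_mono mult_left_mono c) (use Cset_W[OF E_in] i in auto)
  qed
next
  fix i j assume ij: "1 \<le> i" "i \<le> j" "j \<le> n"
  have eq: "comb c i + comb c j = (\<Sum>l=1..n. c l * (E l i + E l j))"
    by (simp add: comb_def sum.distrib[symmetric] algebra_simps)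
  show "if i \<le> k \<and> j \<le> i + a i - 1 then 0 \<le> comb c i + comb c j else comb c i + comb c j \<le> 0"
  proof (cases "i \<le> k \<and> j \<le> i + a i - 1")
    case True
    have "0 \<le> (\<Sum>l=1..n. c l * (E l i + E l j))"
      using E_tab[OF _ ij] True c by (intro sum_nonneg mult_nonneg_nonneg) auto
    then show ?thesis using True eq by simp
  next
    case False
    have "(\<Sum>l=1..n. c l * (E l i + E l j)) \<le> 0"
      using E_tab[OF _ ij] False c by (intro sum_nonpos mult_nonneg_nonpos) auto
    then show ?thesis unfolding if_not_P[OF False] eq .
  qed
qed

lemma Cset_K: "Cset n S = {x \<in> Rn n. \<forall>m\<in>{1..n}. 0 \<le> cf m x}"
proof
  show "Cset n S \<subseteq> {x \<in> Rn n. \<forall>m\<in>{1..n}. 0 \<le> cf m x}" using Cset_Rn CK by auto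
  show "{x \<in> Rn n. \<forall>m\<in>{1..n}. 0 \<le> cf m x} \<subseteq> Cset n S"
  proof
    fix x assume "x \<in> {x \<in> Rn n. \<forall>m\<in>{1..n}. 0 \<le> cf m x}"
    then show "x \<in> Cset n S" using cone[of "\<lambda>l. cf l x"] recon by auto
  qed
qed

lemma Cset_span: "Cset n S = nonneg_span n E"
proof
  show "Cset n S \<subseteq> nonneg_span n E"
  proof
    fix x assume x: "x \<in> Cset n S"
    have "x = comb (\<lambda>l. cf l x)" using recon Cset_Rn x by simp
    then have "\<exists>c. x = (\<lambda>i. \<Sum>l=1..n. c l * E l i) \<and> (\<forall>l\<in>{1..n}. 0 \<le> c l)"
      using CK x unfolding comb_def by (intro exI[of _ "\<lambda>l. cf l x"]) auto
    then show "x \<in> nonneg_span n E" unfolding nonneg_span_def by simp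
  qed
  show "nonneg_span n E \<subseteq> Cset n S"
    unfolding nonneg_span_def using cone unfolding comb_def by blast
qed

lemma indep: "lin_indep_fam n E"
  unfolding lin_indep_fam_def
proof (intro allI impI ballI)
  fix c l assume h: "(\<lambda>i. \<Sum>l=1..n. c l * E l i) = (\<lambda>i. 0)" and l: "l \<in> {1..n}"
  have "c l = cf l (comb c)" using cf_comb l by simp
  also have "\<dots> = cf l (\<lambda>i. 0)" using h by (simp add: comb_def)
  also have "\<dots> = 0" by (simp add: cf_def z_def)
  finally show "c l = 0" .
qed

end


lemma rep_lin:
  fixes G :: "(nat \<Rightarrow> real) \<Rightarrow> real"
  assumes lin: "\<And>(f :: nat \<Rightarrow> nat \<Rightarrow> real) c. G (\<lambda>j. \<Sum>i=1..n. c i * f i j) = (\<Sum>i=1..n. c i * G (f i))"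
  shows "\<exists>a \<in> Rn n. \<forall>x\<in>Rn n. lin_form n a x = G x"
proof -
  define d where "d i = (\<lambda>j. if j = i then 1 else (0::real))" for i :: nat
  define a where "a i = (if i \<in> {1..n} then G (d i) else 0)" for i
  have "a \<in> Rn n" by (simp add: Rn_def a_def)
  moreover have "lin_form n a x = G x" if x: "x \<in> Rn n" for x
  proof -
    have "x = (\<lambda>j. \<Sum>i=1..n. x i * d i j)"
    proof
      fix j
      have "(\<Sum>i=1..n. x i * d i j) = (\<Sum>i=1..n. if i = j then x j else 0)"
        by (intro sum.cong) (auto simp: d_def)
      also have "\<dots> = (if j \<in> {1..n} then x j else 0)" by (simp add: sum.delta[of _ j])
      finally show "x j = (\<Sum>i=1..n. x i * d i j)" using x by (auto simp: Rn_def)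
    qed
    then have "G x = (\<Sum>i=1..n. x i * G (d i))" using lin by metis
    then show ?thesis by (simp add: lin_form_def a_def mult.commute)
  qed
  ultimately show ?thesis by blast
qed

context chb begin

lemma cf_lin: "cf m (\<lambda>j. \<Sum>i\<in>I. c i * f i j) = (\<Sum>i\<in>I. c i * cf m (f i))"
  by (simp add: cf_def z_def sum_distrib_left sum_subtractf algebra_simps)

lemma cf_scale: "cf m (\<lambda>i. t * v i) = t * cf m v"
  by (simp add: cf_def z_def algebra_simps)

lemma cf_0: "cf m (\<lambda>i. 0) = 0" by (simp add: cf_def z_def)

lemma comb_0: "comb (\<lambda>l. 0) = (\<lambda>i. 0)" by (simp add: comb_def)

lemma Rn_scale: "v \<in> Rn n \<Longrightarrow> (\<lambda>i. t * v i) \<in> Rn n" by (simp add: Rn_def)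

lemma zero_C: "(\<lambda>i. 0) \<in> Cset n S" using Cset_K by (simp add: Rn_def cf_0)

lemma scale_C: "x \<in> Cset n S \<Longrightarrow> 0 \<le> t \<Longrightarrow> (\<lambda>i. t * x i) \<in> Cset n S"
  using Cset_K Rn_scale cf_scale by auto

lemma E_comb: "l \<in> {1..n} \<Longrightarrow> comb (\<lambda>l'. if l' = l then 1 else 0) = E l"
proof (rule ext)
  fix i assume l: "l \<in> {1..n}"
  have "comb (\<lambda>l'. if l' = l then 1 else 0) i = (\<Sum>l'=1..n. if l' = l then E l i else 0)"
    unfolding comb_def by (intro sum.cong) auto
  also have "\<dots> = E l i" using l by (simp add: sum.delta)
  finally show "comb (\<lambda>l'. if l' = l then 1 else 0) i = E l i" .
qed

lemma cf_E: "m \<in> {1..n} \<Longrightarrow> l \<in> {1..n} \<Longrightarrow> cf m (E l) = (if m = l then 1 else 0)"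
  using cf_comb[of m "\<lambda>l'. if l' = l then 1 else 0"] E_comb by simp

lemma E_nz: "l \<in> {1..n} \<Longrightarrow> E l \<noteq> (\<lambda>i. 0)"
  using cf_E[of l l] cf_0 by auto

lemma lin_comb: "lin_form n w (comb c) = (\<Sum>l=1..n. c l * lin_form n w (E l))"
proof -
  have "lin_form n w (comb c) = (\<Sum>i=1..n. \<Sum>l=1..n. c l * (w i * E l i))"
    by (simp add: lin_form_def comb_def sum_distrib_left algebra_simps)
  also have "\<dots> = (\<Sum>l=1..n. \<Sum>i=1..n. c l * (w i * E l i))" by (rule sum.swap)
  also have "\<dots> = (\<Sum>l=1..n. c l * lin_form n w (E l))"
    by (simp add: lin_form_def sum_distrib_left)
  finally show ?thesis .
qed

lemma lin_form_scale: "lin_form n w (\<lambda>i. t * x i) = t * lin_form n w x"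
  by (simp add: lin_form_def sum_distrib_left algebra_simps)

definition FL where "FL L = {x \<in> Cset n S. \<forall>m \<in> {1..n} - L. cf m x = 0}"

lemma FL_single: assumes l: "l \<in> {1..n}" shows "FL {l} = ray_from (\<lambda>i. 0) (E l)"
proof
  show "FL {l} \<subseteq> ray_from (\<lambda>i. 0) (E l)"
  proof
    fix x assume x: "x \<in> FL {l}"
    then have xC: "x \<in> Cset n S" and z: "\<And>m. m \<in> {1..n} \<Longrightarrow> m \<noteq> l \<Longrightarrow> cf m x = 0"
      by (auto simp: FL_def)
    have "x = comb (\<lambda>l. cf l x)" using recon Cset_Rn xC by simp
    also have "\<dots> = (\<lambda>i. cf l x * E l i)"
    proof
      fix i
      have "comb (\<lambda>l. cf l x) i = (\<Sum>l'=1..n. if l' = l then cf l x * E l i else 0)"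
        unfolding comb_def by (intro sum.cong) (auto simp: z)
      also have "\<dots> = cf l x * E l i" using l by (simp add: sum.delta)
      finally show "comb (\<lambda>l. cf l x) i = cf l x * E l i" .
    qed
    finally have "x = (\<lambda>i. 0 + cf l x * E l i)" by simp
    moreover have "0 \<le> cf l x" using CK xC l by auto
    ultimately show "x \<in> ray_from (\<lambda>i. 0) (E l)" unfolding ray_from_def by blast
  qed
  show "ray_from (\<lambda>i. 0) (E l) \<subseteq> FL {l}"
  proof
    fix y assume "y \<in> ray_from (\<lambda>i. 0) (E l)"
    then obtain t where t: "0 \<le> t" "y = (\<lambda>i. t * E l i)" unfolding ray_from_def by auto
    have "y \<in> Cset n S" using scale_C[OF E_in[OF l] t(1)] t by simp
    moreover have "\<forall>m \<in> {1..n} - {l}. cf m y = 0" using t cf_scale cf_E l by auto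
    ultimately show "y \<in> FL {l}" by (simp add: FL_def)
  qed
qed

lemma FL_half: assumes L: "L \<subseteq> {1..n}" and h: "is_halfline n (FL L)"
  shows "\<exists>l\<in>{1..n}. FL L = ray_from (\<lambda>i. 0) (E l)"
proof -
  obtain p v where pv: "p \<in> Rn n" "v \<in> Rn n" "v \<noteq> (\<lambda>i. 0)" "FL L = ray_from p v"
    using h unfolding is_halfline_def by blast
  have 0: "(\<lambda>i. 0) \<in> FL L" using zero_C cf_0 by (simp add: FL_def)
  then obtain t0 where t0: "0 \<le> t0" "(\<lambda>i. 0::real) = (\<lambda>i. p i + t0 * v i)"
    using pv(4) unfolding ray_from_def by auto
  have pe: "p i = - t0 * v i" for i using fun_cong[OF t0(2), of i] by simp
  have mult: "\<exists>s. y = (\<lambda>i. s * v i)" if "y \<in> FL L" for y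
  proof -
    have "y \<in> ray_from p v" using that pv(4) by simp
    then obtain t where "y = (\<lambda>i. p i + t * v i)" unfolding ray_from_def by blast
    then have "y = (\<lambda>i. (t - t0) * v i)" by (auto simp: pe algebra_simps)
    then show ?thesis by blast
  qed
  have pin: "p \<in> FL L" "(\<lambda>i. p i + 1 * v i) \<in> FL L"
    using pv(4) unfolding ray_from_def by (force, force)
  have "\<exists>y\<in>FL L. y \<noteq> (\<lambda>i. 0)"
  proof (cases "p = (\<lambda>i. 0)")
    case True
    then show ?thesis using pin(2) pv(3) by (intro bexI[of _ "(\<lambda>i. p i + 1 * v i)"]) auto
  next
    case False
    then show ?thesis using pin(1) by blast
  qed
  then obtain y where y: "y \<in> FL L" "y \<noteq> (\<lambda>i. 0)" by blast
  have "L \<noteq> {}"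
  proof
    assume "L = {}"
    then have "\<forall>m\<in>{1..n}. cf m y = 0" using y(1) by (simp add: FL_def)
    moreover have "y = comb (\<lambda>l. cf l y)" using recon Cset_Rn y(1) by (simp add: FL_def)
    ultimately have "y = comb (\<lambda>l. 0)" unfolding comb_def by simp
    then show False using y(2) comb_0 by simp
  qed
  then obtain l where l: "l \<in> L" by blast
  have El: "E j \<in> FL L" if "j \<in> L" for j
    using that L E_in cf_E by (auto simp: FL_def)
  have "L = {l}"
  proof (rule ccontr)
    assume "L \<noteq> {l}"
    then obtain l' where l': "l' \<in> L" "l' \<noteq> l" using l by blast
    obtain s where s: "E l = (\<lambda>i. s * v i)" using mult El l by blast
    obtain s' where s': "E l' = (\<lambda>i. s' * v i)" using mult El l' by blast
    have "1 = s * cf l v" using cf_E[of l l] s cf_scale L l by (metis subsetD)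
    moreover have "0 = s' * cf l v" using cf_E[of l l'] s' cf_scale L l l' by (metis subsetD)
    ultimately have "s' = 0" by auto
    then have "E l' = (\<lambda>i. 0)" using s' by simp
    then show False using E_nz L l' by auto
  qed
  then show ?thesis using FL_single L l by auto
qed

end


context chb begin

lemma G_lin:
  fixes l :: nat
  defines "G \<equiv> (\<lambda>x. - (\<Sum>m\<in>{1..n} - {l}. cf m x))"
  shows "G (\<lambda>j. \<Sum>i=1..n. c i * f i j) = (\<Sum>i=1..n. c i * G (f i))"
proof -
  have "G (\<lambda>j. \<Sum>i=1..n. c i * f i j) = - (\<Sum>m\<in>{1..n} - {l}. \<Sum>i=1..n. c i * cf m (f i))"
    by (simp add: G_def cf_lin)
  also have "\<dots> = - (\<Sum>i=1..n. \<Sum>m\<in>{1..n} - {l}. c i * cf m (f i))" by (subst sum.swap) simp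
  also have "\<dots> = (\<Sum>i=1..n. c i * G (f i))"
    by (simp add: G_def sum_distrib_left sum_negf)
  finally show ?thesis .
qed

lemma lin_E_C: "lin_form n w x = (\<Sum>l=1..n. cf l x * lin_form n w (E l))" if "x \<in> Cset n S"
  using lin_comb[of w "\<lambda>l. cf l x"] recon[OF Cset_Rn[OF that]] by simp

lemma ext_rays: "extreme_rays n (Cset n S) = {ray_from (\<lambda>i. 0) (E l) | l. l \<in> {1..n}}"
proof
  show "extreme_rays n (Cset n S) \<subseteq> {ray_from (\<lambda>i. 0) (E l) | l. l \<in> {1..n}}"
  proof
    fix F assume "F \<in> extreme_rays n (Cset n S)"
    then have face: "is_face n (Cset n S) F" and hl: "is_halfline n F"
      by (auto simp: extreme_rays_def)
    have "\<exists>L. L \<subseteq> {1..n} \<and> F = FL L"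
    proof (cases "F = Cset n S")
      case True
      then show ?thesis by (intro exI[of _ "{1..n}"]) (auto simp: FL_def)
    next
      case False
      then obtain H where H: "supporting_hyperplane n (Cset n S) H" "F = Cset n S \<inter> H"
        using face by (auto simp: is_face_def)
      then obtain w b where ab: "w \<in> Rn n" "H = {x \<in> Rn n. lin_form n w x = b}"
        "\<forall>x\<in>Cset n S. lin_form n w x \<le> b" "Cset n S \<inter> H \<noteq> {}"
        unfolding supporting_hyperplane_def by blast
      have b0: "0 \<le> b" using ab(3) zero_C by (auto simp: lin_form_def)
      obtain y where y: "y \<in> Cset n S" "lin_form n w y = b" using ab(2,4) by auto
      have "lin_form n w (\<lambda>i. 2 * y i) \<le> b" using ab(3) scale_C[OF y(1), of 2] by auto
      then have "b = 0" using y(2) b0 lin_form_scale[of w 2 y] by simp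
      define L where "L = {l \<in> {1..n}. lin_form n w (E l) = 0}"
      have Eneg: "lin_form n w (E l) \<le> 0" if "l \<in> {1..n}" for l
        using ab(3) E_in[OF that] \<open>b = 0\<close> by auto
      have "F = FL L"
      proof (rule set_eqI)
        fix x
        show "x \<in> F \<longleftrightarrow> x \<in> FL L"
        proof (cases "x \<in> Cset n S")
          case False
          then show ?thesis using H(2) by (auto simp: FL_def)
        next
          case True
          have "lin_form n w x = 0 \<longleftrightarrow> (\<Sum>l=1..n. - (cf l x * lin_form n w (E l))) = 0"
            using lin_E_C[OF True] by (simp add: sum_negf)
          also have "\<dots> \<longleftrightarrow> (\<forall>l\<in>{1..n}. - (cf l x * lin_form n w (E l)) = 0)"
            using CK[OF True] Eneg by (intro sum_nonneg_eq_0_iff) (auto simp: mult_nonneg_nonpos)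
          also have "\<dots> \<longleftrightarrow> (\<forall>m\<in>{1..n} - L. cf m x = 0)" by (auto simp: L_def)
          finally show ?thesis using True H(2) ab(2) \<open>b = 0\<close> Cset_Rn by (auto simp: FL_def)
        qed
      qed
      then show ?thesis by (intro exI[of _ L]) (auto simp: L_def)
    qed
    then obtain L where "L \<subseteq> {1..n}" "F = FL L" by blast
    then show "F \<in> {ray_from (\<lambda>i. 0) (E l) | l. l \<in> {1..n}}" using FL_half hl by blast
  qed
  show "{ray_from (\<lambda>i. 0) (E l) | l. l \<in> {1..n}} \<subseteq> extreme_rays n (Cset n S)"
  proof
    fix F assume "F \<in> {ray_from (\<lambda>i. 0) (E l) | l. l \<in> {1..n}}"
    then obtain l where l: "l \<in> {1..n}" "F = ray_from (\<lambda>i. 0) (E l)" by blast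
    have F: "F = FL {l}" using FL_single l by simp
    have hl: "is_halfline n F"
      unfolding is_halfline_def using l E_Rn E_nz
      by (intro exI[of _ "\<lambda>i. 0"] exI[of _ "E l"]) (auto simp: Rn_def)
    have "is_face n (Cset n S) F"
    proof (cases "n = 1")
      case True
      then have "{1..n} - {l} = {}" using l by auto
      then have "F = Cset n S" using F unfolding FL_def by (simp only:) simp
      then show ?thesis by (simp add: is_face_def)
    next
      case False
      then obtain m0 where m0: "m0 \<in> {1..n}" "m0 \<noteq> l" using l
        by (metis atLeastAtMost_iff le_antisym nat_le_linear not_less_eq_eq)
      define G where "G = (\<lambda>x. - (\<Sum>m\<in>{1..n} - {l}. cf m x))"
      obtain av where av: "av \<in> Rn n" "\<forall>x\<in>Rn n. lin_form n av x = G x"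
        using rep_lin[of G n] G_lin[where l=l] unfolding G_def by blast
      have GE: "G (E m0) = -1"
      proof -
        have "(\<Sum>m\<in>{1..n} - {l}. cf m (E m0)) = (\<Sum>m\<in>{1..n} - {l}. if m = m0 then 1 else 0)"
          using m0 cf_E by (intro sum.cong) auto
        also have "\<dots> = 1" using m0 by (simp add: sum.delta)
        finally show ?thesis by (simp add: G_def)
      qed
      have anz: "av \<noteq> (\<lambda>i. 0)"
      proof
        assume "av = (\<lambda>i. 0)"
        then have "lin_form n av (E m0) = 0" by (simp add: lin_form_def)
        then show False using av(2) E_Rn GE by auto
      qed
      define H where "H = {x \<in> Rn n. lin_form n av x = 0}"
      have Gle: "G x \<le> 0" if "x \<in> Cset n S" for x
        using CK[OF that] unfolding G_def by (auto intro!: sum_nonneg)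
      have sh: "supporting_hyperplane n (Cset n S) H"
        unfolding supporting_hyperplane_def
      proof (intro exI conjI)
        show "av \<in> Rn n" "av \<noteq> (\<lambda>i. 0)" by (fact av(1)) (fact anz)
        show "H = {x \<in> Rn n. lin_form n av x = 0}" by (simp add: H_def)
        show "\<forall>x\<in>Cset n S. lin_form n av x \<le> 0" using av(2) Gle Cset_Rn by auto
        show "Cset n S \<inter> H \<noteq> {}" using zero_C by (auto simp: H_def lin_form_def Rn_def)
      qed
      have "Cset n S \<inter> H = FL {l}"
      proof (rule set_eqI)
        fix x
        show "x \<in> Cset n S \<inter> H \<longleftrightarrow> x \<in> FL {l}"
        proof (cases "x \<in> Cset n S")
          case False then show ?thesis by (auto simp: FL_def)
        next
          case True
          have "x \<in> H \<longleftrightarrow> (\<Sum>m\<in>{1..n} - {l}. cf m x) = 0"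
            using av(2) Cset_Rn[OF True] by (auto simp: H_def G_def)
          also have "\<dots> \<longleftrightarrow> (\<forall>m\<in>{1..n} - {l}. cf m x = 0)"
            using CK[OF True] by (intro sum_nonneg_eq_0_iff) auto
          finally show ?thesis using True by (auto simp: FL_def)
        qed
      qed
      then show ?thesis using sh F unfolding is_face_def by blast
    qed
    then show "F \<in> extreme_rays n (Cset n S)" using hl by (simp add: extreme_rays_def)
  qed
qed

end


lemma components_partition:
  fixes X :: "'a::topological_space set"
  assumes U: "\<Union>A = X" and dj: "\<And>U V. U \<in> A \<Longrightarrow> V \<in> A \<Longrightarrow> U \<inter> V \<noteq> {} \<Longrightarrow> U = V"
    and P: "\<And>U. U \<in> A \<Longrightarrow> connected U \<and> U \<noteq> {} \<and> (\<exists>Q. open Q \<and> U = X \<inter> Q)"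
  shows "components X = A"
proof -
  have key: "D \<subseteq> U" if D: "connected D" "D \<subseteq> X" and UA: "U \<in> A" and DU: "D \<inter> U \<noteq> {}" for D U
  proof (rule ccontr)
    assume nsub: "\<not> D \<subseteq> U"
    obtain Q where Q: "open Q" "U = X \<inter> Q" using P[OF UA] by blast
    define Q2 where "Q2 = \<Union>{Q'. open Q' \<and> (\<exists>V\<in>A. V \<noteq> U \<and> V = X \<inter> Q')}"
    have "open Q2" unfolding Q2_def by auto
    have cov: "D \<subseteq> Q \<union> Q2"
    proof
      fix x assume "x \<in> D"
      then have "x \<in> X" using D by auto
      then obtain V where V: "V \<in> A" "x \<in> V" using U by auto
      show "x \<in> Q \<union> Q2"
      proof (cases "V = U")
        case True then show ?thesis using V Q by auto
      next
        case False
        obtain Q' where Q': "open Q'" "V = X \<inter> Q'" using P[OF V(1)] by blast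
        have m: "Q' \<in> {Q'. open Q' \<and> (\<exists>V\<in>A. V \<noteq> U \<and> V = X \<inter> Q')}"
          apply (rule CollectI)
          apply (rule conjI[OF Q'(1)])
          apply (rule bexI[OF _ V(1)])
          using False Q'(2) by simp
        have "x \<in> Q'" using V(2) Q'(2) by blast
        then have "x \<in> Q2" unfolding Q2_def using m by (rule UnionI[rotated])
        then show ?thesis by blast
      qed
    qed
    have dis: "Q \<inter> Q2 \<inter> D = {}"
    proof (rule ccontr)
      assume "Q \<inter> Q2 \<inter> D \<noteq> {}"
      then obtain x where x: "x \<in> Q" "x \<in> Q2" "x \<in> D" by blast
      from x(2) obtain Q' where Q': "Q' \<in> {Q'. open Q' \<and> (\<exists>V\<in>A. V \<noteq> U \<and> V = X \<inter> Q')}" "x \<in> Q'"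
        unfolding Q2_def by (rule UnionE)
      then have "\<exists>V\<in>A. V \<noteq> U \<and> V = X \<inter> Q'" by simp
      then obtain V where V: "V \<in> A" "V \<noteq> U" "V = X \<inter> Q'" by (elim bexE conjE)
      have "x \<in> X" using x(3) D(2) by blast
      then have "x \<in> U \<inter> V" using Q(2) V(3) x(1) Q'(2) by blast
      then show False using dj[OF UA V(1)] V(2) by blast
    qed
    have n1: "Q \<inter> D \<noteq> {}" using DU Q by auto
    have n2: "Q2 \<inter> D \<noteq> {}"
    proof -
      obtain y where y: "y \<in> D" "y \<notin> U" using nsub by blast
      then have "y \<in> X" using D(2) by blast
      then have "y \<notin> Q" using y(2) Q(2) by blast
      then have "y \<in> Q2" using cov y(1) by blast
      then show ?thesis using y(1) by blast
    qed
    show False using connectedD[OF D(1) Q(1) \<open>open Q2\<close> dis cov] n1 n2 by blast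
  qed
  have inA: "U \<in> components X" if "U \<in> A" for U
    unfolding in_components_maximal
  proof (intro conjI allI impI)
    show "U \<noteq> {}" "connected U" using P[OF that] by auto
    show "U \<subseteq> X" using U that by auto
    fix D assume "D \<noteq> {} \<and> U \<subseteq> D \<and> D \<subseteq> X \<and> connected D"
    then show "D = U" using key[of D U] that P[OF that] by auto
  qed
  show ?thesis
  proof
    show "A \<subseteq> components X" using inA by auto
    show "components X \<subseteq> A"
    proof
      fix C assume C: "C \<in> components X"
      then obtain x where x: "x \<in> C" using in_components_nonempty by blast
      then have "x \<in> X" using in_components_subset C by blast
      then obtain U where UA: "U \<in> A" "x \<in> U" using U by auto
      have "C = U" using components_eq[OF C inA[OF UA(1)]] x UA by auto
      then show "C \<in> A" using UA by simp
    qed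
  qed
qed

lemma W0_strict: assumes "x \<in> W0 n" "1 \<le> i" "i < j" "j \<le> n" shows "x j < x i"
  using assms(3,4)
proof (induction j rule: less_induct)
  case (less j)
  show ?case
  proof (cases "j = Suc i")
    case True then show ?thesis using assms less by (auto simp: W0_def)
  next
    case False
    then have "i < j - 1" "j - 1 < j" using less by auto
    then have "x (j - 1) < x i" using less by auto
    moreover have "x (Suc (j - 1)) < x (j - 1)"
    proof -
      have "\<forall>i. 1 \<le> i \<and> i < n \<longrightarrow> x (Suc i) < x i" using assms(1) by (simp add: W0_def)
      moreover have "1 \<le> j - 1 \<and> j - 1 < n" using assms(2) less \<open>i < j - 1\<close> by linarith
      ultimately show ?thesis by blast
    qed
    moreover have "Suc (j - 1) = j" using \<open>i < j - 1\<close> by simp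
    ultimately show ?thesis by simp
  qed
qed

lemma Wc_mono: assumes "x \<in> Wc n" "1 \<le> i" "i \<le> j" "j \<le> n" shows "x j \<le> x i"
  using assms(3,4)
proof (induction j rule: less_induct)
  case (less j)
  show ?case
  proof (cases "j = i")
    case True then show ?thesis by simp
  next
    case False
    then have "i \<le> j - 1" "j - 1 < j" using less by auto
    then have "x (j - 1) \<le> x i" using less by auto
    moreover have "x (Suc (j - 1)) \<le> x (j - 1)"
    proof -
      have "\<forall>i. 1 \<le> i \<and> i < n \<longrightarrow> x (Suc i) \<le> x i" using assms(1) by (simp add: Wc_def)
      moreover have "1 \<le> j - 1 \<and> j - 1 < n" using assms(2) less \<open>i \<le> j - 1\<close> \<open>j - 1 < j\<close> by linarith
      ultimately show ?thesis by blast
    qed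
    moreover have "Suc (j - 1) = j" using \<open>j - 1 < j\<close> by simp
    ultimately show ?thesis by simp
  qed
qed

lemma W0_Wc: "W0 n \<subseteq> Wc n" by (auto simp: W0_def Wc_def less_imp_le)

lemma notarr: assumes "x \<notin> arr_union n" "1 \<le> i" "i \<le> j" "j \<le> n" "x \<in> Rn n"
  shows "if i = j then x i \<noteq> 0 else x i + x j \<noteq> 0"
proof -
  have "x \<notin> hyp n i j" using assms unfolding arr_union_def by auto
  then show ?thesis using assms(5) by (auto simp: hyp_def)
qed

lemma inarr: assumes "x \<in> arr_union n"
  shows "\<exists>i j. 1 \<le> i \<and> i \<le> j \<and> j \<le> n \<and> (if i = j then x i = 0 else x i + x j = 0)"
proof -
  obtain i j where "i \<in> {1..n}" "j \<in> {i..n}" "x \<in> hyp n i j" using assms unfolding arr_union_def by blast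
  then show ?thesis by (intro exI[of _ i] exI[of _ j]) (auto simp: hyp_def)
qed

lemma WA: assumes x: "x \<in> W0 n - arr_union n"
  shows "\<And>i. i \<in> {1..n} \<Longrightarrow> x i \<noteq> 0"
    and "\<And>i j. i \<in> {1..n} \<Longrightarrow> j \<in> {1..n} \<Longrightarrow> i \<noteq> j \<Longrightarrow> \<bar>x i\<bar> \<noteq> \<bar>x j\<bar>"
proof -
  have R: "x \<in> Rn n" using x by (auto simp: W0_def)
  show nz: "\<And>i. i \<in> {1..n} \<Longrightarrow> x i \<noteq> 0" using x R notarr[of x n] by force
  have ne: "x i + x j \<noteq> 0" if "1 \<le> i" "i < j" "j \<le> n" for i j
    using x R notarr[of x n i j] that by auto
  have lt: "x j < x i" if "1 \<le> i" "i < j" "j \<le> n" for i j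
    using W0_strict x that by auto
  fix i j assume ij: "i \<in> {1..n}" "j \<in> {1..n}" "i \<noteq> j"
  then consider "i < j" | "j < i" by linarith
  then show "\<bar>x i\<bar> \<noteq> \<bar>x j\<bar>"
  proof cases
    case 1
    then have "x j < x i" "x i + x j \<noteq> 0" using ij lt ne by auto
    then show ?thesis by (auto simp: abs_if split: if_splits)
  next
    case 2
    then have "x i < x j" "x j + x i \<noteq> 0" using ij lt ne by auto
    then show ?thesis by (auto simp: abs_if split: if_splits)
  qed
qed

lemma WA_conv: assumes x: "x \<in> Wc n" and nz: "\<And>i. i \<in> {1..n} \<Longrightarrow> x i \<noteq> 0"
  and ab: "\<And>i j. i \<in> {1..n} \<Longrightarrow> j \<in> {1..n} \<Longrightarrow> i \<noteq> j \<Longrightarrow> \<bar>x i\<bar> \<noteq> \<bar>x j\<bar>"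
  shows "x \<in> W0 n - arr_union n"
proof
  have R: "x \<in> Rn n" using x by (auto simp: Wc_def)
  show "x \<in> W0 n"
    unfolding W0_def
  proof (safe intro!: R)
    fix i assume i: "1 \<le> i" "i < n"
    have "x (Suc i) \<le> x i" using x i by (auto simp: Wc_def)
    moreover have "\<bar>x i\<bar> \<noteq> \<bar>x (Suc i)\<bar>" using ab[of i "Suc i"] i by auto
    ultimately show "x (Suc i) < x i" by (cases "x (Suc i) = x i") auto
  qed
  show "x \<notin> arr_union n"
  proof
    assume "x \<in> arr_union n"
    then obtain i j where ij: "1 \<le> i" "i \<le> j" "j \<le> n" "if i = j then x i = 0 else x i + x j = 0"
      using inarr by blast
    show False
    proof (cases "i = j")
      case True then show False using ij nz by auto
    next
      case False
      then have "x i = - x j" using ij by auto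
      then have "\<bar>x i\<bar> = \<bar>x j\<bar>" by simp
      then show False using ab[of i j] ij False by auto
    qed
  qed
qed

context chb begin

definition Ustr where "Ustr = {x \<in> Rn n. \<forall>m\<in>{1..n}. 0 < cf m x}"

lemma Ustr_C: "Ustr \<subseteq> Cset n S" using Cset_K by (auto simp: Ustr_def less_imp_le)

lemma z_pos: assumes "x \<in> Ustr" "m \<in> {1..n}" shows "0 < z m x"
proof -
  have "z m x = (\<Sum>l=m..n. cf l x)" using z_tele assms by auto
  moreover have "0 < (\<Sum>l=m..n. cf l x)" using assms by (intro sum_pos) (auto simp: Ustr_def)
  ultimately show ?thesis by simp
qed

lemma z_strict: assumes "x \<in> Ustr" "m \<in> {1..n}" "m < m'" "m' \<le> n" shows "z m' x < z m x"
proof -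
  have "z m x = (\<Sum>l=m..n. cf l x)" "z m' x = (\<Sum>l=m'..n. cf l x)" using z_tele assms by auto
  moreover have "{m..n} = {m..<m'} \<union> {m'..n}" using assms by auto
  moreover have "(\<Sum>l\<in>{m..<m'} \<union> {m'..n}. cf l x) = (\<Sum>l=m..<m'. cf l x) + (\<Sum>l=m'..n. cf l x)"
    by (intro sum.union_disjoint) auto
  moreover have "0 < (\<Sum>l=m..<m'. cf l x)" using assms by (intro sum_pos) (auto simp: Ustr_def)
  ultimately show ?thesis by simp
qed

lemma abs_idx: assumes "x \<in> Ustr" "m \<in> {1..n}" shows "\<bar>x (idx m)\<bar> = z m x"
proof -
  have "x (idx m) = sg m * z m x" using z_idx assms(2) by simp
  then show ?thesis using z_pos[OF assms] by (simp add: sg_def abs_mult)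
qed

lemma Ustr_W: "Ustr \<subseteq> W0 n - arr_union n"
proof
  fix x assume x: "x \<in> Ustr"
  have xc: "x \<in> Wc n" using Ustr_C x by (auto simp: Cset_def)
  show "x \<in> W0 n - arr_union n"
  proof (rule WA_conv[OF xc])
    fix i assume "i \<in> {1..n}"
    then obtain m where m: "m \<in> {1..n}" "i = idx m" using idx_surj by blast
    show "x i \<noteq> 0" using abs_idx[OF x m(1)] z_pos[OF x m(1)] m(2) by auto
  next
    fix i j assume ij: "i \<in> {1..n}" "j \<in> {1..n}" "i \<noteq> j"
    obtain m where m: "m \<in> {1..n}" "i = idx m" using idx_surj ij by blast
    obtain m' where m': "m' \<in> {1..n}" "j = idx m'" using idx_surj ij by blast
    have "m \<noteq> m'" using m m' ij by auto
    then consider "m < m'" | "m' < m" by linarith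
    then show "\<bar>x i\<bar> \<noteq> \<bar>x j\<bar>"
      using z_strict[OF x m(1), of m'] z_strict[OF x m'(1), of m] m m' abs_idx[OF x m(1)] abs_idx[OF x m'(1)]
      by cases auto
  qed
qed

lemma CW_Ustr: "Cset n S \<inter> (W0 n - arr_union n) \<subseteq> Ustr"
proof
  fix x assume x: "x \<in> Cset n S \<inter> (W0 n - arr_union n)"
  have xw: "x \<in> W0 n - arr_union n" using x by auto
  show "x \<in> Ustr" unfolding Ustr_def
  proof (safe)
    show "x \<in> Rn n" using x Cset_Rn by auto
    fix m assume m: "m \<in> {1..n}"
    have ge: "0 \<le> cf m x" using CK x m by auto
    have "cf m x \<noteq> 0"
    proof (cases "m = n")
      case True
      then have "cf m x = sg m * x (idx m)" using m by (simp add: cf_def z_def)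
      moreover have "x (idx m) \<noteq> 0" using WA(1)[OF xw] idx_range m by auto
      ultimately show ?thesis by (simp add: sg_def)
    next
      case False
      then have ms: "Suc m \<in> {1..n}" using m by auto
      have "cf m x = sg m * x (idx m) - sg (Suc m) * x (idx (Suc m))" using m ms by (simp add: cf_def z_def)
      moreover have "idx m \<noteq> idx (Suc m)" using idx_inj m ms by (auto dest: inj_onD)
      then have "\<bar>x (idx m)\<bar> \<noteq> \<bar>x (idx (Suc m))\<bar>" using WA(2)[OF xw] idx_range m ms by auto
      ultimately show ?thesis by (auto simp: sg_def)
    qed
    then show "0 < cf m x" using ge by simp
  qed
qed

lemma Ustr_eq: "Ustr = Cset n S \<inter> (W0 n - arr_union n)"
  using Ustr_C Ustr_W CW_Ustr by blast

lemma w_in: "comb (\<lambda>l. 1) \<in> Ustr"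
  using cf_comb comb_Rn by (simp add: Ustr_def)

lemma Ustr_ne: "Ustr \<noteq> {}" using w_in by blast

lemma cont_z: "continuous_on UNIV (z m)"
proof (cases "1 \<le> m \<and> m \<le> n")
  case True
  then have "z m = (\<lambda>x. sg m * x (idx m))" by (auto simp: z_def)
  then show ?thesis by (auto intro!: continuous_intros)
next
  case False
  then have "z m = (\<lambda>x. 0)" by (auto simp: z_def)
  then show ?thesis by simp
qed

lemma cont_cf: "continuous_on UNIV (cf m)"
proof -
  have "cf m = (\<lambda>x. z m x - z (Suc m) x)" by (auto simp: cf_def)
  then show ?thesis using cont_z by (auto intro!: continuous_intros)
qed

definition Oset where "Oset = {x. \<forall>m\<in>{1..n}. 0 < cf m x}"

lemma open_O: "open Oset"
proof -
  have "Oset = (\<Inter>m\<in>{1..n}. {x. 0 < cf m x})" by (auto simp: Oset_def)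
  moreover have "open {x. 0 < cf m x}" for m
    using open_Collect_less[of "\<lambda>x. 0" "cf m"] cont_cf by auto
  ultimately show ?thesis by (auto intro!: open_INT)
qed

lemma Ustr_O: "Ustr = (W0 n - arr_union n) \<inter> Oset"
  using Ustr_W by (auto simp: Ustr_def Oset_def W0_def)

lemma Ustr_conn: "connected Ustr"
proof (rule path_connected_imp_connected)
  show "path_connected Ustr"
    unfolding path_connected_def
  proof (intro ballI)
    fix x y assume x: "x \<in> Ustr" and y: "y \<in> Ustr"
    define g where "g t = (\<lambda>i. (1 - t) * x i + t * y i)" for t :: real
    have "path g" unfolding path_def g_def by (auto intro!: continuous_intros)
    moreover have "path_image g \<subseteq> Ustr"
    proof
      fix p assume "p \<in> path_image g"
      then obtain t where t: "t \<in> {0..1}" "p = g t" unfolding path_image_def by auto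
      have "p \<in> Rn n" using x y t by (auto simp: Ustr_def Rn_def g_def)
      moreover have "0 < cf m p" if m: "m \<in> {1..n}" for m
      proof -
        have "cf m p = (1 - t) * cf m x + t * cf m y" using t by (simp add: g_def cf_def z_def algebra_simps)
        moreover have "0 < cf m x" "0 < cf m y" using x y m by (auto simp: Ustr_def)
        moreover have "0 \<le> 1 - t" "0 \<le> t" using t by auto
        ultimately show ?thesis
          by (cases "t = 0") (auto intro: add_nonneg_pos add_pos_nonneg mult_pos_pos)
      qed
      ultimately show "p \<in> Ustr" by (simp add: Ustr_def)
    qed
    moreover have "pathstart g = x" "pathfinish g = y" by (auto simp: pathstart_def pathfinish_def g_def)
    ultimately show "\<exists>g. path g \<and> path_image g \<subseteq> Ustr \<and> pathstart g = x \<and> pathfinish g = y" by blast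
  qed
qed

lemma closed_Rn: "closed (Rn n)"
proof -
  have "Rn n = (\<Inter>i\<in>{i. i \<notin> {1..n}}. {x. x i = 0})" by (auto simp: Rn_def)
  moreover have "closed {x::nat \<Rightarrow> real. x i = 0}" for i
    using closed_Collect_eq[of "\<lambda>x::nat\<Rightarrow>real. x i" "\<lambda>x. 0"] by auto
  ultimately show ?thesis by auto
qed

lemma closed_C: "closed (Cset n S)"
proof -
  have "Cset n S = Rn n \<inter> (\<Inter>m\<in>{1..n}. {x. 0 \<le> cf m x})" using Cset_K by auto
  moreover have "closed {x. 0 \<le> cf m x}" for m
    using closed_Collect_le[of "\<lambda>x. 0" "cf m"] cont_cf by auto
  ultimately show ?thesis using closed_Rn by (auto intro!: closed_Int closed_INT)
qed

lemma closure_U: "closure Ustr = Cset n S"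
proof
  show "closure Ustr \<subseteq> Cset n S" using closure_minimal[OF Ustr_C closed_C] .
  show "Cset n S \<subseteq> closure Ustr"
  proof
    fix x assume x: "x \<in> Cset n S"
    define w where "w = comb (\<lambda>l. 1)"
    define g where "g t = (\<lambda>i. x i + t * w i)" for t :: real
    have cg: "continuous_on (closure {0<..1}) g" unfolding g_def by (auto intro!: continuous_intros)
    have "g ` {0<..1} \<subseteq> Ustr"
    proof
      fix p assume "p \<in> g ` {0<..1}"
      then obtain t where t: "0 < t" "p = g t" by auto
      have "p \<in> Rn n" using x Cset_Rn comb_Rn t by (auto simp: Rn_def g_def w_def)
      moreover have "0 < cf m p" if m: "m \<in> {1..n}" for m
      proof -
        have "cf m p = cf m x + t * cf m w" using t by (simp add: g_def cf_def z_def algebra_simps)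
        moreover have "cf m w = 1" using cf_comb m w_def by simp
        moreover have "0 \<le> cf m x" using CK x m by auto
        ultimately show ?thesis using t by simp
      qed
      ultimately show "p \<in> Ustr" by (simp add: Ustr_def)
    qed
    then have "g ` {0<..1} \<subseteq> closure Ustr" using closure_subset by blast
    then have "g ` closure {0<..1} \<subseteq> closure Ustr"
      by (intro image_closure_subset[OF cg]) auto
    moreover have "(0::real) \<in> closure {0<..1}" by simp
    moreover have "g 0 = x" by (simp add: g_def)
    ultimately show "x \<in> closure Ustr" by force
  qed
qed

end


lemma down_closed_interval:
  fixes P :: "nat set"
  assumes sub: "P \<subseteq> {1..n}" and dc: "\<And>i i'. i \<in> P \<Longrightarrow> 1 \<le> i' \<Longrightarrow> i' \<le> i \<Longrightarrow> i' \<in> P"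
  shows "P = {1..card P}"
proof (cases "P = {}")
  case True then show ?thesis by simp
next
  case False
  have fin: "finite P" using sub finite_subset by blast
  have "P = {1..Max P}"
  proof
    show "P \<subseteq> {1..Max P}" using sub fin by auto
    show "{1..Max P} \<subseteq> P" using dc[of "Max P"] Max_in[OF fin False] by auto
  qed
  then obtain m where m: "P = {1..m}" by blast
  then have "card P = m" by simp
  then show ?thesis using m by simp
qed

lemma up_interval:
  fixes B :: "nat set"
  assumes fin: "finite B" and i: "i \<in> B" and ge: "\<And>j. j \<in> B \<Longrightarrow> i \<le> j"
    and dc: "\<And>j j'. j \<in> B \<Longrightarrow> i \<le> j' \<Longrightarrow> j' \<le> j \<Longrightarrow> j' \<in> B"
  shows "B = {i..<i + card B}"
proof -
  have ne: "B \<noteq> {}" using i by auto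
  have "B = {i..Max B}"
  proof
    show "B \<subseteq> {i..Max B}" using ge fin by auto
    show "{i..Max B} \<subseteq> B" using dc[of "Max B"] Max_in[OF fin ne] by auto
  qed
  moreover have "i \<le> Max B" using i fin by simp
  ultimately obtain m where m: "B = {i..m}" "i \<le> m" by blast
  then have "card B = Suc m - i" by simp
  then show ?thesis using m by auto
qed

definition rk :: "nat \<Rightarrow> (nat \<Rightarrow> real) \<Rightarrow> nat \<Rightarrow> nat" where
  "rk n x i = card {j \<in> {1..n}. \<bar>x j\<bar> \<le> \<bar>x i\<bar>}"

definition Sx :: "nat \<Rightarrow> (nat \<Rightarrow> real) \<Rightarrow> nat set" where
  "Sx n x = rk n x ` {i \<in> {1..n}. 0 < x i}"

lemma rk_range: "i \<in> {1..n} \<Longrightarrow> 1 \<le> rk n x i \<and> rk n x i \<le> n"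
proof -
  assume i: "i \<in> {1..n}"
  have "{j \<in> {1..n}. \<bar>x j\<bar> \<le> \<bar>x i\<bar>} \<noteq> {}" using i by auto
  then have "0 < rk n x i" unfolding rk_def by (simp add: card_gt_0_iff)
  moreover have "rk n x i \<le> card {1..n}" unfolding rk_def by (intro card_mono) auto
  ultimately show ?thesis by simp
qed

lemma rk_strict: assumes "j \<in> {1..n}" "\<bar>x i\<bar> < \<bar>x j\<bar>" shows "rk n x i < rk n x j"
proof -
  have "{j \<in> {1..n}. \<bar>x j\<bar> \<le> \<bar>x i\<bar>} \<subseteq> {j' \<in> {1..n}. \<bar>x j'\<bar> \<le> \<bar>x j\<bar>}" using assms by auto
  moreover have "j \<in> {j' \<in> {1..n}. \<bar>x j'\<bar> \<le> \<bar>x j\<bar>}" "j \<notin> {j \<in> {1..n}. \<bar>x j\<bar> \<le> \<bar>x i\<bar>}"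
    using assms by auto
  ultimately have "{j \<in> {1..n}. \<bar>x j\<bar> \<le> \<bar>x i\<bar>} \<subset> {j' \<in> {1..n}. \<bar>x j'\<bar> \<le> \<bar>x j\<bar>}" by blast
  then show ?thesis unfolding rk_def by (intro psubset_card_mono) auto
qed

locale wx =
  fixes n :: nat and x :: "nat \<Rightarrow> real"
  assumes X: "x \<in> W0 n - arr_union n"
begin

lemma xWc: "x \<in> Wc n" using X W0_Wc by auto

lemma mono: "1 \<le> i \<Longrightarrow> i \<le> j \<Longrightarrow> j \<le> n \<Longrightarrow> x j \<le> x i" using Wc_mono xWc by blast

definition P where "P = {i \<in> {1..n}. 0 < x i}"

lemma P_int: "P = {1..card P}"
  by (rule down_closed_interval[of _ n]) (auto simp: P_def intro: less_le_trans[OF _ mono])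

lemma RA: assumes i: "i \<in> {1..n}" "0 < x i"
  shows "{j \<in> {i..n}. 0 \<le> x i + x j} = {i..<i + rk n x i}"
proof -
  define B where "B = {j \<in> {i..n}. 0 \<le> x i + x j}"
  have AB: "{j \<in> {1..n}. \<bar>x j\<bar> \<le> \<bar>x i\<bar>} = B"
  proof
    show "{j \<in> {1..n}. \<bar>x j\<bar> \<le> \<bar>x i\<bar>} \<subseteq> B"
    proof
      fix j assume j: "j \<in> {j \<in> {1..n}. \<bar>x j\<bar> \<le> \<bar>x i\<bar>}"
      have "i \<le> j"
      proof (rule ccontr)
        assume "\<not> i \<le> j"
        then have "x i < x j" using W0_strict[of x n j i] X j i by auto
        then show False using j i by auto
      qed
      then show "j \<in> B" using j i by (auto simp: B_def)
    qed
    show "B \<subseteq> {j \<in> {1..n}. \<bar>x j\<bar> \<le> \<bar>x i\<bar>}"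
    proof
      fix j assume j: "j \<in> B"
      then have "x j \<le> x i" using mono i by (auto simp: B_def)
      then show "j \<in> {j \<in> {1..n}. \<bar>x j\<bar> \<le> \<bar>x i\<bar>}" using j i by (auto simp: B_def)
    qed
  qed
  have "B = {i..<i + card B}"
  proof (rule up_interval)
    show "finite B" by (simp add: B_def)
    show "i \<in> B" using i by (simp add: B_def)
    show "\<And>j. j \<in> B \<Longrightarrow> i \<le> j" by (simp add: B_def)
    fix j j' assume "j \<in> B" "i \<le> j'" "j' \<le> j"
    moreover then have "x j \<le> x j'" using mono i by (auto simp: B_def)
    ultimately show "j' \<in> B" by (auto simp: B_def)
  qed
  then show ?thesis using AB by (simp add: B_def rk_def)
qed

lemma cover: "Sx n x \<subseteq> {1..n} \<and> x \<in> Cset n (Sx n x)"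
proof
  show "Sx n x \<subseteq> {1..n}" using rk_range by (auto simp: Sx_def)
  define kk where "kk = card P"
  have Pk: "P = {1..kk}" using P_int kk_def by simp
  have dec: "rk n x j < rk n x i" if "1 \<le> i" "i < j" "j \<le> kk" for i j
  proof -
    have "i \<in> P" "j \<in> P" using that Pk by auto
    then have "0 < x j" "x j < x i" "i \<in> {1..n}" using W0_strict[of x n i j] X that by (auto simp: P_def)
    then show ?thesis using rk_strict[of i n x j] by auto
  qed
  have "Sx n x = rk n x ` P" by (simp add: Sx_def P_def)
  then have img: "rk n x ` {1..kk} = Sx n x" using Pk by simp
  have cS: "card (Sx n x) = kk" using kl_unique(1)[OF dec img] by simp
  have kth: "kth_largest (Sx n x) i = rk n x i" if "i \<in> {1..kk}" for i
    using kl_unique(2)[OF dec img that] by simp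
  show "x \<in> Cset n (Sx n x)"
    unfolding Cset_def
  proof (safe intro!: xWc)
    fix i j assume ij: "1 \<le> i" "i \<le> j" "j \<le> n"
    show "if i \<le> card (Sx n x) \<and> j \<le> i + kth_largest (Sx n x) i - 1 then 0 \<le> x i + x j else x i + x j \<le> 0"
    proof (cases "i \<le> kk")
      case True
      then have iP: "i \<in> P" using Pk ij by auto
      then have xi: "0 < x i" "i \<in> {1..n}" by (auto simp: P_def)
      have r1: "1 \<le> rk n x i" using rk_range xi by auto
      have "j \<in> {j \<in> {i..n}. 0 \<le> x i + x j} \<longleftrightarrow> j \<in> {i..<i + rk n x i}"
        using RA[OF xi(2) xi(1)] by simp
      then have "0 \<le> x i + x j \<longleftrightarrow> j < i + rk n x i" using ij by simp
      then have eqv: "0 \<le> x i + x j \<longleftrightarrow> j \<le> i + rk n x i - 1" using r1 by linarith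
      have c: "i \<le> card (Sx n x) \<and> j \<le> i + kth_largest (Sx n x) i - 1 \<longleftrightarrow> j \<le> i + rk n x i - 1"
        using cS kth[of i] True ij by auto
      show ?thesis unfolding c using eqv by auto
    next
      case False
      then have "i \<notin> P" using Pk by auto
      then have "x i \<le> 0" using ij by (auto simp: P_def)
      moreover have "x j \<le> x i" using mono ij by auto
      ultimately show ?thesis using False cS by auto
    qed
  qed
qed

lemma unique: assumes S: "S \<subseteq> {1..n}" and xS: "x \<in> Cset n S" shows "S = Sx n x"
proof -
  interpret chb n S by unfold_locales (rule S)
  have pos: "0 < x i \<longleftrightarrow> i \<le> k" if i: "i \<in> {1..n}" for i
  proof
    assume "i \<le> k"
    then have ik: "i \<in> {1..k}" using i by auto
    have c: "i \<le> k \<and> i \<le> i + a i - 1" using a_range(1)[OF ik] ik by auto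
    have "0 \<le> x i + x i" using Cset_tab[OF xS, of i i] i c by auto
    moreover have "x i \<noteq> 0" using WA(1)[OF X i] .
    ultimately show "0 < x i" by simp
  next
    assume "0 < x i"
    moreover have "\<not> i \<le> k \<Longrightarrow> x i + x i \<le> 0" using Cset_tab[OF xS, of i i] i by auto
    ultimately show "i \<le> k" by fastforce
  qed
  have Pk: "P = {1..k}" using pos k_le by (auto simp: P_def)
  have ar: "a i = rk n x i" if ik: "i \<in> {1..k}" for i
  proof -
    have i: "i \<in> {1..n}" using ik k_le by auto
    have xi: "0 < x i" using pos i ik by auto
    have ar1: "1 \<le> a i" "a i + i \<le> n + 1" using a_range ik by auto
    have "{j \<in> {i..n}. 0 \<le> x i + x j} = {i..<i + a i}"
    proof (rule set_eqI)
      fix j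
      show "j \<in> {j \<in> {i..n}. 0 \<le> x i + x j} \<longleftrightarrow> j \<in> {i..<i + a i}"
      proof (cases "i \<le> j \<and> j \<le> n")
        case False then show ?thesis using ar1 by auto
      next
        case True
        have t: "if i \<le> k \<and> j \<le> i + a i - 1 then 0 \<le> x i + x j else x i + x j \<le> 0"
          using Cset_tab[OF xS, of i j] True i by auto
        have nz: "x i + x j \<noteq> 0"
        proof (cases "i = j")
          case True then show ?thesis using xi by simp
        next
          case False
          have "x \<notin> arr_union n" "x \<in> Rn n" using X by (auto simp: W0_def)
          then show ?thesis using notarr[of x n i j] False True i by auto
        qed
        have "0 \<le> x i + x j \<longleftrightarrow> j \<le> i + a i - 1" using t nz ik by (auto split: if_splits)
        then show ?thesis using True ar1 by auto
      qed
    qed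
    then have "{i..<i + a i} = {i..<i + rk n x i}" using RA[OF i xi] by simp
    then show ?thesis using ar1 by (metis card_atLeastLessThan add_diff_cancel_left')
  qed
  have "S = a ` {1..k}" using a_img by simp
  also have "\<dots> = rk n x ` {1..k}" using ar by (auto intro: image_cong)
  also have "\<dots> = Sx n x" using Pk by (simp add: Sx_def P_def)
  finally show ?thesis .
qed

end



theorem theorem1p16:
  fixes n :: nat
  shows "(bij_betw (Cset n) (Pow {1..n}) (chambers n) \<and> card (chambers n) = 2 ^ n)
    \<and> (\<forall>S. S \<subseteq> {1..n} \<longrightarrow>
           extreme_rays n (Cset n S) = {ray_from (\<lambda>i. 0) (e_vec n S l) | l. l \<in> {1..n}}
         \<and> Cset n S = nonneg_span n (e_vec n S)
         \<and> lin_indep_fam n (e_vec n S))"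
proof -
  define X where "X = W0 n - arr_union n"
  define U where "U S = chb.Ustr n S" for S
  have chbI: "chb n S" if "S \<subseteq> {1..n}" for S using that by (rule chb.intro)
  have cov: "Sx n x \<subseteq> {1..n} \<and> x \<in> Cset n (Sx n x)" if "x \<in> X" for x
    using wx.cover[OF wx.intro] that X_def by blast
  have uniq: "S = Sx n x" if "x \<in> X" "S \<subseteq> {1..n}" "x \<in> Cset n S" for x S
    using wx.unique[OF wx.intro] that X_def by blast
  have UC: "U S \<subseteq> Cset n S \<inter> X" if "S \<subseteq> {1..n}" for S
    using chb.Ustr_C[OF chbI[OF that]] chb.Ustr_W[OF chbI[OF that]] by (auto simp: U_def X_def)
  have comps: "components X = U ` Pow {1..n}"
  proof (rule components_partition)
    show "\<Union>(U ` Pow {1..n}) = X"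
    proof
      show "\<Union>(U ` Pow {1..n}) \<subseteq> X" using UC by blast
      show "X \<subseteq> \<Union>(U ` Pow {1..n})"
      proof
        fix x assume x: "x \<in> X"
        have "x \<in> U (Sx n x)" using chb.CW_Ustr[OF chbI] cov[OF x] x by (auto simp: U_def X_def)
        then show "x \<in> \<Union>(U ` Pow {1..n})" using cov[OF x] by auto
      qed
    qed
  next
    fix V W assume V: "V \<in> U ` Pow {1..n}" and W: "W \<in> U ` Pow {1..n}" and ne: "V \<inter> W \<noteq> {}"
    then obtain S S' where S: "S \<subseteq> {1..n}" "V = U S" and S': "S' \<subseteq> {1..n}" "W = U S'" by auto
    obtain x where "x \<in> V" "x \<in> W" using ne by auto
    then have "x \<in> X" "x \<in> Cset n S" "x \<in> Cset n S'" using UC S S' by auto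
    then have "S = S'" using uniq S S' by metis
    then show "V = W" using S S' by simp
  next
    fix V assume "V \<in> U ` Pow {1..n}"
    then obtain S where S: "S \<subseteq> {1..n}" "V = U S" by auto
    interpret chb n S by (rule chbI[OF S(1)])
    show "connected V \<and> V \<noteq> {} \<and> (\<exists>Q. open Q \<and> V = X \<inter> Q)"
      using Ustr_conn Ustr_ne open_O Ustr_O S(2) by (auto simp: U_def X_def)
  qed
  have ch: "chambers n = Cset n ` Pow {1..n}"
  proof -
    have "chambers n = closure ` U ` Pow {1..n}" by (simp add: chambers_def comps[unfolded X_def])
    also have "\<dots> = Cset n ` Pow {1..n}"
      by (auto simp: image_image U_def chb.closure_U[OF chbI] intro!: image_cong)
    finally show ?thesis .
  qed
  have inj: "inj_on (Cset n) (Pow {1..n})"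
  proof (rule inj_onI)
    fix S S' assume S: "S \<in> Pow {1..n}" and S': "S' \<in> Pow {1..n}" and eq: "Cset n S = Cset n S'"
    obtain x where x: "x \<in> U S" using chb.Ustr_ne[OF chbI] S by (auto simp: U_def)
    then have "x \<in> X" "x \<in> Cset n S" using UC S by auto
    then show "S = S'" using uniq S S' eq by (metis PowD)
  qed
  have bij: "bij_betw (Cset n) (Pow {1..n}) (chambers n)"
    using inj ch by (simp add: bij_betw_def)
  have card: "card (chambers n) = 2 ^ n"
    using bij_betw_same_card[OF bij] by (simp add: card_Pow)
  have part2: "\<forall>S. S \<subseteq> {1..n} \<longrightarrow>
           extreme_rays n (Cset n S) = {ray_from (\<lambda>i. 0) (e_vec n S l) | l. l \<in> {1..n}}
         \<and> Cset n S = nonneg_span n (e_vec n S)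
         \<and> lin_indep_fam n (e_vec n S)"
    using chb.ext_rays[OF chbI] chb.Cset_span[OF chbI] chb.indep[OF chbI] by blast
  show ?thesis using bij card part2 by blast
qed


end
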